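(* Every forest of order $n$ has at most $4^{n/5}$ perfect total dominating sets. The bound is attained by disjoint unions of stars on $5$ vertices ($K_{1,4}$).
   Context: A perfect total dominating set of a graph $G=(V,E)$ is a set $D\subseteq V$ such that every vertex of $V$ (whether in $D$ or not) has exactly one neighbour in $D$. Order = number of vertices. *)

theory Defs
  imports Complex_Main
begin

definition simple_graph :: "'a set \<Rightarrow> ('a \<Rightarrow> 'a \<Rightarrow> bool) \<Rightarrow> bool" where
  "simple_graph V E \<longleftrightarrow> finite V \<and> (\<forall>x y. E x y \<longrightarrow> x \<in> V \<and> y \<in> V)
     \<and> (\<forall>x y. E x y \<longrightarrow> E y x) \<and> (\<forall>x. \<not> E x x)"

definition is_cycle :: "'a set \<Rightarrow> ('a \<Rightarrow> 'a \<Rightarrow> bool) \<Rightarrow> 'a list \<Rightarrow> bool" where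
  "is_cycle V E cs \<longleftrightarrow> length cs \<ge> 3 \<and> distinct cs \<and> set cs \<subseteq> V
     \<and> (\<forall>i < length cs. E (cs ! i) (cs ! ((i + 1) mod length cs)))"

definition forest :: "'a set \<Rightarrow> ('a \<Rightarrow> 'a \<Rightarrow> bool) \<Rightarrow> bool" where
  "forest V E \<longleftrightarrow> simple_graph V E \<and> (\<nexists>cs. is_cycle V E cs)"

definition nbhd :: "'a set \<Rightarrow> ('a \<Rightarrow> 'a \<Rightarrow> bool) \<Rightarrow> 'a \<Rightarrow> 'a set" where
  "nbhd V E v = {u \<in> V. E v u}"

definition perfect_total_dominating :: "'a set \<Rightarrow> ('a \<Rightarrow> 'a \<Rightarrow> bool) \<Rightarrow> 'a set \<Rightarrow> bool" where
  "perfect_total_dominating V E D \<longleftrightarrow> D \<subseteq> V \<and> (\<forall>v \<in> V. card (nbhd V E v \<inter> D) = 1)"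

definition ptds_sets :: "'a set \<Rightarrow> ('a \<Rightarrow> 'a \<Rightarrow> bool) \<Rightarrow> 'a set set" where
  "ptds_sets V E = {D. perfect_total_dominating V E D}"

text \<open>Disjoint union of k copies of the star K_{1,4}: vertices (i,j), i<k, j<5;
(i,0) is the centre of the i-th star.\<close>
definition stars_V :: "nat \<Rightarrow> (nat \<times> nat) set" where
  "stars_V k = {(i, j). i < k \<and> j < 5}"

definition stars_E :: "nat \<Rightarrow> nat \<times> nat \<Rightarrow> nat \<times> nat \<Rightarrow> bool" where
  "stars_E k p q \<longleftrightarrow> p \<in> stars_V k \<and> q \<in> stars_V k \<and> fst p = fst q
     \<and> ((snd p = 0 \<and> snd q \<noteq> 0) \<or> (snd p \<noteq> 0 \<and> snd q = 0))"

end

theory Submission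
  imports Defs "HOL-Library.FuncSet"
begin


definition gpath :: "'a set \<Rightarrow> ('a \<Rightarrow> 'a \<Rightarrow> bool) \<Rightarrow> 'a list \<Rightarrow> bool" where
  "gpath W E xs \<longleftrightarrow> distinct xs \<and> set xs \<subseteq> W \<and> (\<forall>i. Suc i < length xs \<longrightarrow> E (xs!i) (xs!Suc i))"

lemma two_elem:
  assumes "finite S" "card S \<ge> 2" shows "\<exists>z\<in>S. z \<noteq> a"
proof (rule ccontr)
  assume "\<not> ?thesis"
  then have "S \<subseteq> {a}" by blast
  then have "card S \<le> card {a}" by (intro card_mono) auto
  with assms show False by simp
qed

lemma path_extend:
  assumes sg: "simple_graph V E" and nc: "\<nexists>cs. is_cycle V E cs" and W: "W \<subseteq> V"
    and deg: "\<forall>v\<in>W. card (nbhd W E v) \<ge> 2" and p: "gpath W E xs" and ne: "xs \<noteq> []"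
  shows "\<exists>ys. gpath W E ys \<and> length ys = Suc (length xs)"
proof -
  have finV: "finite V" and sym: "\<And>x y. E x y \<Longrightarrow> E y x" and irr: "\<And>x. \<not> E x x"
    using sg unfolding simple_graph_def by auto
  obtain x rest where xs: "xs = x # rest" using ne by (cases xs) auto
  have xW: "x \<in> W" using p xs unfolding gpath_def by auto
  have finN: "finite (nbhd W E x)" using finV W unfolding nbhd_def
    by (metis (no_types, lifting) finite_subset mem_Collect_eq subsetI)
  define a where "a = (if rest = [] then x else hd rest)"
  obtain z where z: "z \<in> nbhd W E x" "z \<noteq> a"
    using two_elem[OF finN] deg xW by blast
  have Exz: "E x z" and zW: "z \<in> W" using z unfolding nbhd_def by auto
  show ?thesis
  proof (cases "z \<in> set xs")
    case False
    have "gpath W E (z # xs)"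
      unfolding gpath_def
    proof (intro conjI allI impI)
      show "distinct (z # xs)" using False p unfolding gpath_def by auto
      show "set (z # xs) \<subseteq> W" using zW p unfolding gpath_def by auto
      fix i assume i: "Suc i < length (z # xs)"
      show "E ((z # xs) ! i) ((z # xs) ! Suc i)"
      proof (cases i)
        case 0 then show ?thesis using xs sym[OF Exz] by simp
      next
        case (Suc m) then show ?thesis using p i unfolding gpath_def by auto
      qed
    qed
    then show ?thesis by auto
  next
    case True
    then obtain j where j: "j < length xs" "xs ! j = z" by (auto simp: in_set_conv_nth)
    have "z \<noteq> x" using Exz irr by auto
    then have j0: "j \<noteq> 0"
    proof -
      have "j = 0 \<Longrightarrow> False" using j xs \<open>z \<noteq> x\<close> by simp
      then show ?thesis by blast
    qed
    have rne: "rest \<noteq> []" using j j0 xs by auto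
    then have "a = xs ! 1" using xs a_def by (cases rest) auto
    then have j1: "j \<noteq> 1" using z j by auto
    define cs where "cs = take (Suc j) xs"
    have lcs: "length cs = Suc j" using j cs_def by simp
    have "is_cycle V E cs"
      unfolding is_cycle_def
    proof (intro conjI allI impI)
      show "3 \<le> length cs" using lcs j0 j1 by simp
      show "distinct cs" using p unfolding cs_def gpath_def by simp
      show "set cs \<subseteq> V" using p W unfolding cs_def gpath_def by (meson dual_order.trans set_take_subset)
      fix i assume i: "i < length cs"
      show "E (cs ! i) (cs ! ((i + 1) mod length cs))"
      proof (cases "i < j")
        case True
        then have "(i + 1) mod length cs = Suc i" using lcs by simp
        moreover have "Suc i < length xs" using True j by simp
        ultimately show ?thesis using p True unfolding gpath_def cs_def by simp
      next
        case False
        then have "i = j" using i lcs by simp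
        have c1: "cs ! j = z" using j unfolding cs_def by simp
        have c2: "cs ! 0 = x" using xs unfolding cs_def by simp
        show ?thesis using \<open>i = j\<close> c1 c2 lcs sym[OF Exz] by simp
      qed
    qed
    with nc show ?thesis by blast
  qed
qed

lemma long_paths:
  assumes sg: "simple_graph V E" and nc: "\<nexists>cs. is_cycle V E cs" and W: "W \<subseteq> V"
    and deg: "\<forall>v\<in>W. card (nbhd W E v) \<ge> 2" and ne: "W \<noteq> {}"
  shows "\<exists>xs. gpath W E xs \<and> length xs = Suc k"
proof (induction k)
  case 0
  obtain w where "w \<in> W" using ne by auto
  then have "gpath W E [w]" unfolding gpath_def by auto
  then show ?case by auto
next
  case (Suc k)
  then obtain xs where "gpath W E xs" "length xs = Suc k" by auto
  then show ?case using path_extend[OF sg nc W deg] by (metis list.size(3) nat.distinct(1))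
qed

lemma leaf_exists:
  assumes sg: "simple_graph V E" and nc: "\<nexists>cs. is_cycle V E cs" and W: "W \<subseteq> V"
    and ne: "W \<noteq> {}"
  shows "\<exists>v\<in>W. card (nbhd W E v) \<le> 1"
proof (rule ccontr)
  assume "\<not> ?thesis"
  then have deg: "\<forall>v\<in>W. card (nbhd W E v) \<ge> 2" by auto
  obtain xs where xs: "gpath W E xs" "length xs = Suc (card W)"
    using long_paths[OF sg nc W deg ne] by blast
  have finW: "finite W" using sg W unfolding simple_graph_def by (meson finite_subset)
  have "card (set xs) = length xs" using xs unfolding gpath_def by (simp add: distinct_card)
  moreover have "card (set xs) \<le> card W" using xs finW unfolding gpath_def by (simp add: card_mono)
  ultimately show False using xs by simp
qed

lemma nat_pow5: "(d::nat)^5 \<le> 4^(d+1)"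
proof (cases "d < 4")
  case True
  then have "d = 0 \<or> d = 1 \<or> d = 2 \<or> d = 3" by arith
  then show ?thesis by auto
next
  case False
  then have "4 \<le> d" by simp
  then show ?thesis
  proof (induction d rule: dec_induct)
    case base then show ?case by simp
  next
    case (step n)
    have "4 * (n + 1) \<le> 5 * n" using step by simp
    then have "(4 * (n + 1))^5 \<le> (5 * n)^5" by (rule power_mono) simp
    then have "4^5 * (n+1)^5 \<le> 5^5 * n^5" by (metis power_mult_distrib)
    then have "1024 * (n+1)^5 \<le> 3125 * n^5" by simp
    then have "(n+1)^5 \<le> 4 * n^5" by linarith
    also have "\<dots> \<le> 4 * 4^(n+1)" using step by simp
    finally show ?case by simp
  qed
qed

lemma real_bound: "real d \<le> 4 powr ((real d + 1) / 5)"
proof -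
  define p where "p = (4::real) powr ((real d + 1) / 5)"
  have "p ^ Suc 4 = 4 powr (real (Suc 4) * ((real d + 1) / 5))"
    unfolding p_def by (rule powr_power) simp
  also have "\<dots> = 4 powr (real (d+1))" by (rule arg_cong[where f="\<lambda>t. 4 powr t"]) simp
  also have "\<dots> = 4 ^ (d+1)" by (rule powr_realpow) simp
  finally have p5: "p ^ Suc 4 = 4 ^ (d+1)" .
  have "real d ^ Suc 4 \<le> 4 ^ (d+1)"
    using nat_pow5[of d] by (metis numeral_eq_Suc of_nat_le_iff of_nat_numeral of_nat_power pred_numeral_simps(3) Suc_eq_numeral)
  then have "real d ^ Suc 4 \<le> p ^ Suc 4" using p5 by simp
  then show ?thesis unfolding p_def by (rule power_le_imp_le_base) simp
qed



lemma fin_ptds: "finite W \<Longrightarrow> finite (ptds_sets W E)"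
  unfolding ptds_sets_def perfect_total_dominating_def
  by (rule finite_subset[of _ "Pow W"]) auto

lemma count_bound:
  assumes fin: "finite V" and sym: "\<And>x y. E x y \<Longrightarrow> E y x" and irr: "\<And>x. \<not> E x x"
    and leaf: "\<And>W. W \<subseteq> V \<Longrightarrow> W \<noteq> {} \<Longrightarrow> \<exists>v\<in>W. card (nbhd W E v) \<le> 1"
  shows "W \<subseteq> V \<Longrightarrow> real (card (ptds_sets W E)) \<le> 4 powr (real (card W) / 5)"
proof (induction "card W" arbitrary: W rule: less_induct)
  case less
  have finW: "finite W" using less.prems fin by (meson finite_subset)
  define N where "N = nbhd W E"
  have NW: "\<And>x. N x \<subseteq> W" unfolding N_def nbhd_def by auto
  have finN: "\<And>x. finite (N x)" using NW finW by (meson finite_subset)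
  have Nmem: "\<And>x z. z \<in> N x \<longleftrightarrow> z \<in> W \<and> E x z" unfolding N_def nbhd_def by auto
  have ptdsI: "\<And>D. D \<in> ptds_sets W E \<longleftrightarrow> D \<subseteq> W \<and> (\<forall>w\<in>W. card (N w \<inter> D) = 1)"
    unfolding ptds_sets_def perfect_total_dominating_def N_def by auto
  show ?case
  proof (cases "W = {}")
    case True
    then have "ptds_sets W E = {{}}"
      unfolding ptds_sets_def perfect_total_dominating_def by auto
    then show ?thesis using True by simp
  next
    case False
    then obtain v where v: "v \<in> W" "card (N v) \<le> 1" using leaf less.prems N_def by blast
    show ?thesis
    proof (cases "card (N v) = 0")
      case True
      then have "N v = {}" using finN by simp
      then have "ptds_sets W E = {}" using ptdsI v by fastforce
      then show ?thesis by simp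
    next
      case False
      then have "card (N v) = 1" using v by simp
      then obtain u where Nv: "N v = {u}" by (meson card_1_singletonE)
      have uW: "u \<in> W" using Nv NW by auto
      have uD: "\<And>D. D \<in> ptds_sets W E \<Longrightarrow> u \<in> D"
      proof -
        fix D assume "D \<in> ptds_sets W E"
        then have "card (N v \<inter> D) = 1" using ptdsI v by auto
        then show "u \<in> D" using Nv by (metis Int_insert_left_if0 card.empty inf_bot_left zero_neq_one)
      qed
      define X where "X y = N u \<union> N y" for y
      define d where "d = card (N u)"
      have incl: "ptds_sets W E \<subseteq> (\<Union>y\<in>N u. (\<lambda>D'. D' \<union> {u, y}) ` ptds_sets (W - X y) E)"
      proof
        fix D assume D: "D \<in> ptds_sets W E"
        have DW: "D \<subseteq> W" and cD: "\<And>w. w \<in> W \<Longrightarrow> card (N w \<inter> D) = 1" using D ptdsI by auto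
        have "u \<in> D" using uD D by blast
        obtain y where Ny: "N u \<inter> D = {y}" using cD[OF uW] by (meson card_1_singletonE)
        have yD: "y \<in> D" and yN: "y \<in> N u" using Ny by auto
        have Euy: "E u y" and yW: "y \<in> W" using yN Nmem by auto
        have uNy: "u \<in> N y" using Nmem sym[OF Euy] uW by auto
        obtain z where Nz: "N y \<inter> D = {z}" using cD[OF yW] by (meson card_1_singletonE)
        then have Nyu: "N y \<inter> D = {u}" using uNy \<open>u \<in> D\<close> by auto
        have Deq: "D = (D - X y) \<union> {u, y}" using Ny Nyu \<open>u \<in> D\<close> yD unfolding X_def by auto
        have "D - X y \<in> ptds_sets (W - X y) E"
          unfolding ptds_sets_def perfect_total_dominating_def
        proof (intro CollectI conjI ballI)
          show "D - X y \<subseteq> W - X y" using DW by auto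
          fix w assume w: "w \<in> W - X y"
          have "nbhd (W - X y) E w \<inter> (D - X y) = N w \<inter> D"
          proof
            show "nbhd (W - X y) E w \<inter> (D - X y) \<subseteq> N w \<inter> D"
              unfolding nbhd_def N_def by auto
            show "N w \<inter> D \<subseteq> nbhd (W - X y) E w \<inter> (D - X y)"
            proof
              fix z assume z: "z \<in> N w \<inter> D"
              have zW: "z \<in> W" and Ewz: "E w z" and zD: "z \<in> D" using z Nmem by auto
              have "z \<notin> X y"
              proof
                assume "z \<in> X y"
                then show False
                proof (unfold X_def, elim UnE)
                  assume "z \<in> N u"
                  then have "z = y" using Ny zD by auto
                  then have "w \<in> N y" using Nmem sym[OF Ewz] w by auto
                  then show False using w X_def by auto
                next
                  assume "z \<in> N y"
                  then have "z = u" using Nyu zD by auto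
                  then have "w \<in> N u" using Nmem sym[OF Ewz] w by auto
                  then show False using w X_def by auto
                qed
              qed
              then show "z \<in> nbhd (W - X y) E w \<inter> (D - X y)"
                using zW Ewz zD unfolding nbhd_def by auto
            qed
          qed
          then show "card (nbhd (W - X y) E w \<inter> (D - X y)) = 1" using cD w by simp
        qed
        then show "D \<in> (\<Union>y\<in>N u. (\<lambda>D'. D' \<union> {u, y}) ` ptds_sets (W - X y) E)"
          using yN Deq by blast
      qed
      have finU: "finite (\<Union>y\<in>N u. (\<lambda>D'. D' \<union> {u, y}) ` ptds_sets (W - X y) E)"
        using finN finW by (auto intro: fin_ptds)
      have c1: "card (ptds_sets W E) \<le> (\<Sum>y\<in>N u. card (ptds_sets (W - X y) E))"
      proof -
        have "card (ptds_sets W E) \<le> card (\<Union>y\<in>N u. (\<lambda>D'. D' \<union> {u, y}) ` ptds_sets (W - X y) E)"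
          by (rule card_mono[OF finU incl])
        also have "\<dots> \<le> (\<Sum>y\<in>N u. card ((\<lambda>D'. D' \<union> {u, y}) ` ptds_sets (W - X y) E))"
          by (rule card_UN_le[OF finN])
        also have "\<dots> \<le> (\<Sum>y\<in>N u. card (ptds_sets (W - X y) E))"
          by (rule sum_mono) (rule card_image_le, simp add: fin_ptds finW)
        finally show ?thesis .
      qed
      have bnd: "real (card (ptds_sets (W - X y) E)) \<le> 4 powr ((real (card W) - real d - 1) / 5)"
        if yN: "y \<in> N u" for y
      proof -
        have Euy: "E u y" and yW: "y \<in> W" using yN Nmem by auto
        have uNy: "u \<in> N y" using Nmem sym[OF Euy] uW by auto
        have XW: "X y \<subseteq> W" using NW X_def by auto
        have sub: "insert u (N u) \<subseteq> X y" using uNy X_def by auto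
        have "u \<notin> N u" using Nmem irr by auto
        then have ci: "card (insert u (N u)) = d + 1" using finN d_def by simp
        have finX: "finite (X y)" using XW finW by (meson finite_subset)
        have "d + 1 \<le> card (X y)" using card_mono[OF finX sub] ci by simp
        moreover have cX: "card (X y) \<le> card W" using card_mono[OF finW XW] .
        moreover have "card (W - X y) = card W - card (X y)" using card_Diff_subset[OF finX XW] .
        ultimately have cle: "card (W - X y) + d + 1 \<le> card W" and clt: "card (W - X y) < card W" by auto
        have "real (card (ptds_sets (W - X y) E)) \<le> 4 powr (real (card (W - X y)) / 5)"
          using less.hyps[OF clt] less.prems by auto
        also have "\<dots> \<le> 4 powr ((real (card W) - real d - 1) / 5)"
          by (rule powr_mono) (use cle in auto)
        finally show ?thesis .
      qed
      have "real (card (ptds_sets W E)) \<le> (\<Sum>y\<in>N u. real (card (ptds_sets (W - X y) E)))"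
        using c1 by (metis of_nat_le_iff of_nat_sum)
      also have "\<dots> \<le> (\<Sum>y\<in>N u. 4 powr ((real (card W) - real d - 1) / 5))"
        by (rule sum_mono) (rule bnd)
      also have "\<dots> = real d * 4 powr ((real (card W) - real d - 1) / 5)"
        using d_def by simp
      also have "\<dots> \<le> 4 powr ((real d + 1) / 5) * 4 powr ((real (card W) - real d - 1) / 5)"
        by (rule mult_right_mono[OF real_bound]) simp
      also have "\<dots> = 4 powr (real (card W) / 5)"
        by (simp add: powr_add[symmetric] add_divide_distrib[symmetric])
      finally show ?thesis .
    qed
  qed
qed



lemma stars_E_sym: "stars_E k p q \<Longrightarrow> stars_E k q p"
  unfolding stars_E_def by auto

lemma stars_leaf:
  assumes "stars_E k p q" "stars_E k p r" "snd p \<noteq> 0" shows "q = r"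
  using assms unfolding stars_E_def by (cases q, cases r) auto

lemma stars_forest: "forest (stars_V k) (stars_E k)"
  unfolding forest_def
proof (intro conjI notI)
  have "stars_V k = {..<k} \<times> {..<5}" unfolding stars_V_def by auto
  then have "finite (stars_V k)" by simp
  then show "simple_graph (stars_V k) (stars_E k)"
    unfolding simple_graph_def stars_E_def by auto
next
  assume "\<exists>cs. is_cycle (stars_V k) (stars_E k) cs"
  then obtain cs where c: "is_cycle (stars_V k) (stars_E k) cs" by blast
  define n where "n = length cs"
  have n3: "n \<ge> 3" and dist: "distinct cs"
    and adj: "\<And>i. i < n \<Longrightarrow> stars_E k (cs ! i) (cs ! ((i + 1) mod n))"
    using c unfolding is_cycle_def n_def by auto
  have e01: "stars_E k (cs ! 0) (cs ! 1)" using adj[of 0] n3 by simp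
  show False
  proof (cases "snd (cs ! 1) = 0")
    case False
    have "stars_E k (cs ! 1) (cs ! 2)" using adj[of 1] n3 by (simp add: numeral_2_eq_2)
    then have "cs ! 0 = cs ! 2" using stars_leaf[OF stars_E_sym[OF e01] _ False] by blast
    moreover have "(cs ! 0 = cs ! 2) = (0 = (2::nat))"
      by (rule nth_eq_iff_index_eq[OF dist]) (use n3 n_def in auto)
    ultimately show False by simp
  next
    case True
    then have s0: "snd (cs ! 0) \<noteq> 0" using e01 unfolding stars_E_def by auto
    have "stars_E k (cs ! (n - 1)) (cs ! 0)" using adj[of "n - 1"] n3 by simp
    then have "cs ! 1 = cs ! (n - 1)" using stars_leaf[OF e01 stars_E_sym s0] by blast
    then show False using dist n3 n_def by (simp add: nth_eq_iff_index_eq)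
  qed
qed

lemma stars_nbhd:
  assumes "(i, j) \<in> stars_V k"
  shows "nbhd (stars_V k) (stars_E k) (i, j) =
           (if j = 0 then {(i, l) | l. 1 \<le> l \<and> l \<le> 4} else {(i, 0)})"
  using assms unfolding nbhd_def stars_E_def stars_V_def by auto

definition gstar :: "nat \<Rightarrow> (nat \<Rightarrow> nat) \<Rightarrow> (nat \<times> nat) set" where
  "gstar k f = {(i, 0) | i. i < k} \<union> {(i, f i) | i. i < k}"

lemma stars_ptds_eq:
  "ptds_sets (stars_V k) (stars_E k) = gstar k ` (PiE {..<k} (\<lambda>_. {1..4}))"
proof
  show "gstar k ` (PiE {..<k} (\<lambda>_. {1..4})) \<subseteq> ptds_sets (stars_V k) (stars_E k)"
  proof
    fix D assume "D \<in> gstar k ` (PiE {..<k} (\<lambda>_. {1..4}))"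
    then obtain f where f: "f \<in> PiE {..<k} (\<lambda>_. {1..4})" and D: "D = gstar k f" by blast
    have fi: "\<And>i. i < k \<Longrightarrow> 1 \<le> f i \<and> f i \<le> 4" using f by auto
    show "D \<in> ptds_sets (stars_V k) (stars_E k)"
      unfolding ptds_sets_def perfect_total_dominating_def
    proof (intro CollectI conjI ballI)
      show "D \<subseteq> stars_V k" using fi unfolding D gstar_def stars_V_def by force
      fix p assume p: "p \<in> stars_V k"
      obtain i j where pij: "p = (i, j)" by (cases p)
      have ik: "i < k" using p pij unfolding stars_V_def by auto
      show "card (nbhd (stars_V k) (stars_E k) p \<inter> D) = 1"
      proof (cases "j = 0")
        case True
        have "nbhd (stars_V k) (stars_E k) p \<inter> D = {(i, f i)}"
          using stars_nbhd[of i j k] p pij True fi[OF ik] ik unfolding D gstar_def by auto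
        then show ?thesis by simp
      next
        case False
        have "nbhd (stars_V k) (stars_E k) p \<inter> D = {(i, 0)}"
          using stars_nbhd[of i j k] p pij False ik unfolding D gstar_def by auto
        then show ?thesis by simp
      qed
    qed
  qed
next
  show "ptds_sets (stars_V k) (stars_E k) \<subseteq> gstar k ` (PiE {..<k} (\<lambda>_. {1..4}))"
  proof
    fix D assume "D \<in> ptds_sets (stars_V k) (stars_E k)"
    then have DV: "D \<subseteq> stars_V k" and cD: "\<And>p. p \<in> stars_V k \<Longrightarrow> card (nbhd (stars_V k) (stars_E k) p \<inter> D) = 1"
      unfolding ptds_sets_def perfect_total_dominating_def by auto
    have cent: "(i, 0) \<in> D" if "i < k" for i
    proof -
      have "(i, 1) \<in> stars_V k" using that unfolding stars_V_def by auto
      from cD[OF this] have "card ({(i, 0)} \<inter> D) = 1" using stars_nbhd[of i 1 k] \<open>(i,1) \<in> stars_V k\<close> by simp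
      then show ?thesis by (metis Int_insert_left_if0 card.empty inf_bot_left zero_neq_one)
    qed
    have leafsel: "\<exists>l. 1 \<le> l \<and> l \<le> 4 \<and> nbhd (stars_V k) (stars_E k) (i, 0) \<inter> D = {(i, l)}" if "i < k" for i
    proof -
      have "(i, 0) \<in> stars_V k" using that unfolding stars_V_def by auto
      from cD[OF this] obtain p where p: "nbhd (stars_V k) (stars_E k) (i, 0) \<inter> D = {p}"
        by (meson card_1_singletonE)
      then have "p \<in> nbhd (stars_V k) (stars_E k) (i, 0)" by auto
      then obtain l where "p = (i, l)" "1 \<le> l" "l \<le> 4" using stars_nbhd[of i 0 k] \<open>(i, 0) \<in> stars_V k\<close> by auto
      then show ?thesis using p by blast
    qed
    define f where "f i = (if i < k then (SOME l. 1 \<le> l \<and> l \<le> 4 \<and> nbhd (stars_V k) (stars_E k) (i, 0) \<inter> D = {(i, l)}) else undefined)" for i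
    have fprop: "1 \<le> f i \<and> f i \<le> 4 \<and> nbhd (stars_V k) (stars_E k) (i, 0) \<inter> D = {(i, f i)}" if "i < k" for i
      unfolding f_def using that someI_ex[OF leafsel[OF that]] by simp
    have fPi: "f \<in> PiE {..<k} (\<lambda>_. {1..4})"
      using fprop unfolding PiE_def extensional_def Pi_def by (auto simp: f_def)
    have "D = gstar k f"
    proof
      show "D \<subseteq> gstar k f"
      proof
        fix p assume pD: "p \<in> D"
        obtain i j where pij: "p = (i, j)" by (cases p)
        have ik: "i < k" and j5: "j < 5" using pD DV pij unfolding stars_V_def by auto
        show "p \<in> gstar k f"
        proof (cases "j = 0")
          case True then show ?thesis using pij ik unfolding gstar_def by auto
        next
          case False
          have "(i, 0) \<in> stars_V k" using ik unfolding stars_V_def by auto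
          then have "p \<in> nbhd (stars_V k) (stars_E k) (i, 0) \<inter> D"
            using stars_nbhd[of i 0 k] pD pij False j5 by auto
          then have "p = (i, f i)" using fprop[OF ik] by auto
          then show ?thesis using ik unfolding gstar_def by auto
        qed
      qed
      show "gstar k f \<subseteq> D"
        using cent fprop unfolding gstar_def by auto
    qed
    then show "D \<in> gstar k ` (PiE {..<k} (\<lambda>_. {1..4}))" using fPi by blast
  qed
qed

lemma gstar_inj: "inj_on (gstar k) (PiE {..<k} (\<lambda>_. {1..4}))"
proof
  fix f g assume f: "f \<in> PiE {..<k} (\<lambda>_. {1..4})" and g: "g \<in> PiE {..<k} (\<lambda>_. {1..4})"
    and eq: "gstar k f = gstar k g"
  show "f = g"
  proof
    fix i show "f i = g i"
    proof (cases "i < k")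
      case True
      have "f i \<in> {1..4}" "g i \<in> {1..4}" using f g True by (auto simp: PiE_iff)
      then have "f i \<noteq> 0" "g i \<noteq> 0" by auto
      moreover have "(i, f i) \<in> gstar k g" using eq True unfolding gstar_def by blast
      ultimately show ?thesis unfolding gstar_def by auto
    next
      case False then show ?thesis using f g by (simp add: PiE_def extensional_def)
    qed
  qed
qed

lemma stars_count: "card (ptds_sets (stars_V k) (stars_E k)) = 4 ^ k"
  using stars_ptds_eq card_image[OF gstar_inj] by (simp add: card_PiE)

lemma stars_card: "card (stars_V k) = 5 * k"
proof -
  have "stars_V k = {..<k} \<times> {..<5}" unfolding stars_V_def by auto
  then show ?thesis by (simp add: card_cartesian_product)
qed


theorem mainTheorem19:
  shows "(\<forall>(V :: 'a set) E. forest V E \<longrightarrow>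
            real (card (ptds_sets V E)) \<le> 4 powr (real (card V) / 5))
       \<and> (\<forall>k. forest (stars_V k) (stars_E k)
            \<and> real (card (ptds_sets (stars_V k) (stars_E k)))
                = 4 powr (real (card (stars_V k)) / 5))"
proof (intro conjI allI impI)
  fix V :: "'a set" and E
  assume fo: "forest V E"
  then have sg: "simple_graph V E" and nc: "\<nexists>cs. is_cycle V E cs" unfolding forest_def by auto
  have fin: "finite V" and sym: "\<And>x y. E x y \<Longrightarrow> E y x" and irr: "\<And>x. \<not> E x x"
    using sg unfolding simple_graph_def by auto
  show "real (card (ptds_sets V E)) \<le> 4 powr (real (card V) / 5)"
    by (rule count_bound[OF fin sym irr leaf_exists[OF sg nc]]) auto
next
  fix k
  show "forest (stars_V k) (stars_E k)" by (rule stars_forest)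
  have "4 powr (real (card (stars_V k)) / 5) = 4 powr (real k)"
    by (rule arg_cong[where f="\<lambda>t. 4 powr t"]) (simp add: stars_card)
  also have "\<dots> = 4 ^ k" by (rule powr_realpow) simp
  finally show "real (card (ptds_sets (stars_V k) (stars_E k))) = 4 powr (real (card (stars_V k)) / 5)"
    by (simp add: stars_count)
qed

end
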